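(* Let $\tau$ be a topology on $\omega^\omega$ such that the standard foliage tree $\mathbf S$ is a $\pi$-tree on $(\omega^\omega,\tau)$. Let $Y=\bigcap_{n\in\omega}U_n$, where each $U_n$ is an open $\pi$-dense subset of the Baire space $(\omega^\omega,\tau_{\mathcal N})$. Then $Y$, as a subspace of $(\omega^\omega,\tau)$, has a $\pi$-tree.
   Context: $\tau_{\mathcal N}$ is the product topology on $\omega^\omega$ ($\omega$ discrete); $(\omega^\omega,\tau_{\mathcal N})$ is the Baire space. A tree is a pair $(Q,<)$ with $<$ irreflexive transitive and every set of predecessors well-ordered; $\mathrm{sons}(x)$ = immediate successors of $x$; a branch is a maximal chain. A foliage tree is $\mathbf F=(\mathcal T,l)$ with $\mathcal T$ a tree and leaves $\mathbf F_x=l(x)$ at nodes $x$. The standard foliage tree $\mathbf S$ has skeleton $(\omega^{<\omega},\subsetneq)$ and leaves $\mathbf S_x=\{p\in\omega^\omega: x\subseteq p\}$. For $A\subseteq\omega^\omega$: $A$ is $\pi$-dense in the Baire space iff for every $y\in\omega^{<\omega}$ the set $\{n\in\omega:\mathbf S_{y^\frown\langle n\rangle}\subseteq A\}$ is infinite. $\mathrm{fruit}_{\mathbf F}(A)=\bigcap_{x\in A}\mathbf F_x$; $\mathrm{shoot}_{\mathbf F}(z)=\{\bigcup_{s\in C}\mathbf F_s:C$ cofinite in $\mathrm{sons}(z)\}$; $\mathrm{scope}_{\mathbf F}(p)=\{y:p\in\mathbf F_y\}$; $\gamma\gg\delta$ means every nonempty $D\in\delta$ contains some nonempty $G\in\gamma$.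 A Baire foliage tree on a space $X$ is a foliage tree whose skeleton is isomorphic to $(\omega^{<\omega},\subsetneq)$, all of whose leaves are open in $X$, which is locally strict (for each non-maximal $x$, $\mathbf F_x$ is the disjoint union of the $\mathbf F_s$, $s\in\mathrm{sons}(x)$), has strict branches (at least one node, and $\mathrm{fruit}_{\mathbf F}(B)$ is a singleton for every branch $B$), and whose leaf at the least node is $X$. $\mathbf F$ grows into $X$ if for every $p\in X$ and every neighbourhood $U$ of $p$ in $X$ there is $z\in\mathrm{scope}_{\mathbf F}(p)$ with $\mathrm{shoot}_{\mathbf F}(z)\gg\{U\}$. A $\pi$-tree on $X$ is a Baire foliage tree on $X$ that grows into $X$. *)

theory Defs
  imports "HOL-Analysis.Analysis" "HOL-Library.Sublist"
begin

text \<open>Skeleton (omega^<omega>, strict extension): finite sequences as nat lists,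
  ordered by strict prefix. A foliage tree with this skeleton is a leaf map
  from nat lists to subsets of the space.\<close>

definition sons :: "nat list \<Rightarrow> nat list set" where
  "sons x = {x @ [n] | n. True}"

definition skel_chain :: "nat list set \<Rightarrow> bool" where
  "skel_chain C \<longleftrightarrow> (\<forall>x\<in>C. \<forall>y\<in>C. prefix x y \<or> prefix y x)"

definition skel_branch :: "nat list set \<Rightarrow> bool" where
  "skel_branch B \<longleftrightarrow> skel_chain B \<and> (\<forall>C. skel_chain C \<and> B \<subseteq> C \<longrightarrow> C = B)"

definition fruit :: "(nat list \<Rightarrow> 'a set) \<Rightarrow> nat list set \<Rightarrow> 'a set" where
  "fruit F A = (\<Inter>x\<in>A. F x)"

definition shoot :: "(nat list \<Rightarrow> 'a set) \<Rightarrow> nat list \<Rightarrow> 'a set set" where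
  "shoot F z = {\<Union>s\<in>C. F s | C. C \<subseteq> sons z \<and> finite (sons z - C)}"

definition scope :: "(nat list \<Rightarrow> 'a set) \<Rightarrow> 'a \<Rightarrow> nat list set" where
  "scope F p = {y. p \<in> F y}"

definition pi_base_refines :: "'a set set \<Rightarrow> 'a set set \<Rightarrow> bool" (infix "\<ggreater>" 50) where
  "\<gamma> \<ggreater> \<delta> \<longleftrightarrow> (\<forall>D\<in>\<delta>. D \<noteq> {} \<longrightarrow> (\<exists>G\<in>\<gamma>. G \<noteq> {} \<and> G \<subseteq> D))"

definition locally_strict :: "(nat list \<Rightarrow> 'a set) \<Rightarrow> bool" where
  "locally_strict F \<longleftrightarrow> (\<forall>x. sons x \<noteq> {} \<longrightarrow>
      F x = (\<Union>s\<in>sons x. F s) \<and>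
      (\<forall>s\<in>sons x. \<forall>t\<in>sons x. s \<noteq> t \<longrightarrow> F s \<inter> F t = {}))"

definition strict_branches :: "(nat list \<Rightarrow> 'a set) \<Rightarrow> bool" where
  "strict_branches F \<longleftrightarrow> (\<forall>B. skel_branch B \<longrightarrow> (\<exists>p. fruit F B = {p}))"

definition baire_foliage_tree :: "'a topology \<Rightarrow> (nat list \<Rightarrow> 'a set) \<Rightarrow> bool" where
  "baire_foliage_tree X F \<longleftrightarrow>
     (\<forall>x. openin X (F x)) \<and> locally_strict F \<and> strict_branches F \<and> F [] = topspace X"

definition grows_into :: "'a topology \<Rightarrow> (nat list \<Rightarrow> 'a set) \<Rightarrow> bool" where
  "grows_into X F \<longleftrightarrow> (\<forall>p\<in>topspace X. \<forall>U. openin X U \<and> p \<in> U \<longrightarrow>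
      (\<exists>z\<in>scope F p. shoot F z \<ggreater> {U}))"

definition pi_tree :: "'a topology \<Rightarrow> (nat list \<Rightarrow> 'a set) \<Rightarrow> bool" where
  "pi_tree X F \<longleftrightarrow> baire_foliage_tree X F \<and> grows_into X F"

definition std_leaf :: "nat list \<Rightarrow> (nat \<Rightarrow> nat) set" where
  "std_leaf x = {p. \<forall>i<length x. p i = x ! i}"

definition baire_space :: "(nat \<Rightarrow> nat) topology" where
  "baire_space = product_topology (\<lambda>_. discrete_topology (UNIV :: nat set)) UNIV"

definition pi_dense :: "(nat \<Rightarrow> nat) set \<Rightarrow> bool" where
  "pi_dense A \<longleftrightarrow> (\<forall>y. infinite {n. std_leaf (y @ [n]) \<subseteq> A})"

end

theory Submission
  imports Defs "HOL-Library.Infinite_Set"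
begin



definition qlist :: "(nat \<Rightarrow> nat) \<Rightarrow> nat \<Rightarrow> nat list" where
  "qlist q n = map q [0..<n]"

lemma length_qlist[simp]: "length (qlist q n) = n"
  by (simp add: qlist_def)

lemma nth_qlist[simp]: "i < n \<Longrightarrow> qlist q n ! i = q i"
  by (simp add: qlist_def)

lemma qlist_Suc: "qlist q (Suc n) = qlist q n @ [q n]"
  by (simp add: qlist_def)

lemma take_qlist: "j \<le> n \<Longrightarrow> take j (qlist q n) = qlist q j"
  by (simp add: qlist_def take_map)

lemma std_leaf_iff: "q \<in> std_leaf w \<longleftrightarrow> w = qlist q (length w)"
proof
  assume a: "q \<in> std_leaf w"
  show "w = qlist q (length w)"
  proof (rule nth_equalityI)
    fix i assume "i < length w"
    then show "w ! i = qlist q (length w) ! i" using a unfolding std_leaf_def by simp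
  qed simp
next
  assume a: "w = qlist q (length w)"
  have "q i = w ! i" if "i < length w" for i
    using that by (subst a) simp
  then show "q \<in> std_leaf w" unfolding std_leaf_def by blast
qed

lemma qlist_in_std_leaf: "q \<in> std_leaf (qlist q n)"
  by (simp add: std_leaf_iff)

lemma std_leaf_prefix: "prefix u w \<Longrightarrow> std_leaf w \<subseteq> std_leaf u"
proof
  fix p assume "prefix u w" "p \<in> std_leaf w"
  then obtain z where w: "w = u @ z" by (auto simp: prefix_def)
  have "p i = u ! i" if "i < length u" for i
  proof -
    have "p i = w ! i" using \<open>p \<in> std_leaf w\<close> that w unfolding std_leaf_def by simp
    then show ?thesis using that w by (simp add: nth_append)
  qed
  then show "p \<in> std_leaf u" unfolding std_leaf_def by blast
qed

lemma std_leaf_disj: "m \<noteq> m' \<Longrightarrow> std_leaf (v@[m]) \<inter> std_leaf (v@[m']) = {}"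
proof (rule ccontr)
  assume "m \<noteq> m'" "std_leaf (v@[m]) \<inter> std_leaf (v@[m']) \<noteq> {}"
  then obtain p where "p \<in> std_leaf (v@[m])" "p \<in> std_leaf (v@[m'])" by blast
  then have a: "\<forall>i<length (v @ [m]). p i = (v @ [m]) ! i" "\<forall>i<length (v @ [m']). p i = (v @ [m']) ! i"
    unfolding std_leaf_def by simp_all
  have "p (length v) = m" using spec[OF a(1), of "length v"] by simp
  moreover have "p (length v) = m'" using spec[OF a(2), of "length v"] by simp
  ultimately have "m = m'" by simp
  then show False using \<open>m \<noteq> m'\<close> by simp
qed

lemma std_leaf_Nil[simp]: "std_leaf [] = UNIV"
  by (simp add: std_leaf_def)

lemma prefix_qlist: "prefix w (qlist q n) \<longleftrightarrow> w = qlist q (length w) \<and> length w \<le> n"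
proof
  assume "prefix w (qlist q n)"
  then obtain z where "qlist q n = w @ z" by (auto simp: prefix_def)
  then have "take (length w) (qlist q n) = w" "length w \<le> n"
    by (simp, metis le_add1 length_append length_qlist)
  then show "w = qlist q (length w) \<and> length w \<le> n"
    using take_qlist by metis
next
  assume "w = qlist q (length w) \<and> length w \<le> n"
  then show "prefix w (qlist q n)" by (metis take_is_prefix take_qlist)
qed

lemma branch_char:
  assumes "skel_branch B"
  shows "\<exists>a. B = range (\<lambda>n. map a [0..<n])"
proof -
  have ch: "\<And>x y. x \<in> B \<Longrightarrow> y \<in> B \<Longrightarrow> prefix x y \<or> prefix y x"
    using assms unfolding skel_branch_def skel_chain_def by blast
  have mx: "\<And>C. skel_chain C \<Longrightarrow> B \<subseteq> C \<Longrightarrow> C = B"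
    using assms unfolding skel_branch_def by blast
  have pc: "y \<in> B" if "x \<in> B" "prefix y x" for x y
  proof -
    have yz: "prefix y z \<or> prefix z y" if "z \<in> B" for z
    proof (cases "prefix x z")
      case True then show ?thesis using \<open>prefix y x\<close> prefix_order.order_trans by blast
    next
      case False then have "prefix z x" using ch[OF \<open>x \<in> B\<close> that] by blast
      then show ?thesis using \<open>prefix y x\<close> prefix_same_cases by blast
    qed
    have "skel_chain (insert y B)"
      unfolding skel_chain_def using ch yz by blast
    then show ?thesis using mx by blast
  qed
  have nil: "[] \<in> B"
  proof -
    have "skel_chain (insert [] B)" unfolding skel_chain_def using ch by auto
    then show ?thesis using mx by blast
  qed
  have longer: "\<exists>y\<in>B. length x < length y" if "x \<in> B" for x
  proof (rule ccontr)
    assume nl: "\<not> (\<exists>y\<in>B. length x < length y)"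
    have le: "prefix y x" if "y \<in> B" for y
    proof -
      have "length y \<le> length x" using nl that by auto
      then show ?thesis using ch[OF \<open>x \<in> B\<close> that]
        by (auto simp: prefix_def)
    qed
    have "skel_chain (insert (x@[0]) B)" unfolding skel_chain_def
      using le ch by (auto intro: prefix_order.order_trans)
    then have "x@[0] \<in> B" using mx by blast
    then show False using nl by auto
  qed
  have ex_ge: "\<exists>x\<in>B. n \<le> length x" for n
  proof (induction n)
    case 0 then show ?case using nil by auto
  next
    case (Suc n)
    then obtain x where "x \<in> B" "n \<le> length x" by blast
    then obtain y where "y \<in> B" "length x < length y" using longer by blast
    then show ?case using \<open>n \<le> length x\<close> by (intro bexI[of _ y]) auto
  qed
  have ex: "\<exists>x\<in>B. length x = n" for n
    using ex_ge[of n] pc by (metis length_take min_absorb2 take_is_prefix)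
  have uq: "x = y" if "x \<in> B" "y \<in> B" "length x = length y" for x y
    using ch[OF that(1,2)] that(3) by (auto simp: prefix_def)
  define el where "el n = (SOME x. x \<in> B \<and> length x = n)" for n
  have el: "el n \<in> B \<and> length (el n) = n" for n
  proof -
    have "\<exists>x. x \<in> B \<and> length x = n" using ex[of n] by blast
    then show ?thesis unfolding el_def by (rule someI_ex)
  qed
  define a where "a i = el (Suc i) ! i" for i
  have rep: "x = map a [0..<length x]" if "x \<in> B" for x
  proof (rule nth_equalityI)
    fix i assume "i < length x"
    have "take (Suc i) x \<in> B" using pc[OF that] take_is_prefix by blast
    then have "take (Suc i) x = el (Suc i)" using uq el \<open>i < length x\<close> by auto
    have "x ! i = take (Suc i) x ! i" using \<open>i < length x\<close> by simp
    also have "\<dots> = a i" unfolding a_def using \<open>take (Suc i) x = el (Suc i)\<close> by simp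
    also have "\<dots> = map a [0..<length x] ! i" using \<open>i < length x\<close> by simp
    finally show "x ! i = map a [0..<length x] ! i" .
  qed simp
  have "B = range (\<lambda>n. map a [0..<n])"
  proof
    show "B \<subseteq> range (\<lambda>n. map a [0..<n])" using rep by blast
    show "range (\<lambda>n. map a [0..<n]) \<subseteq> B"
    proof
      fix y assume "y \<in> range (\<lambda>n. map a [0..<n])"
      then obtain n where y: "y = map a [0..<n]" by blast
      have "el n = map a [0..<length (el n)]" using rep el by blast
      then have "el n = y" using el y by simp
      then show "y \<in> B" using el by metis
    qed
  qed
  then show ?thesis by blast
qed




datatype st = PS "nat list" nat | SP "nat list" nat "nat list" nat

locale setting =
  fixes \<tau> :: "(nat \<Rightarrow> nat) topology" and U :: "nat \<Rightarrow> (nat \<Rightarrow> nat) set"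
  assumes top: "topspace \<tau> = UNIV"
    and pit: "pi_tree \<tau> std_leaf"
    and opn: "\<And>n. openin baire_space (U n)"
    and pd: "\<And>n. pi_dense (U n)"
begin

definition Y where "Y = (\<Inter>n. U n)"
definition good where "good k w \<longleftrightarrow> std_leaf w \<subseteq> U k"
definition Gs where "Gs k w = {m. good k (w@[m])}"

lemma Gs_inf: "infinite (Gs k w)"
  using pd[of k] unfolding pi_dense_def Gs_def good_def by blast

definition cls where
  "cls k w m = length w + 1 + fst (prod_decode (inv_into UNIV (enumerate (Gs k w)) m))"

definition pending where
  "pending k u0 w \<longleftrightarrow> prefix u0 w \<and> (\<forall>j. length u0 < j \<and> j \<le> length w \<longrightarrow> \<not> good k (take j w))"

definition PP where
  "PP k u0 t = (\<Union>{std_leaf (w@[m]) | w m. pending k u0 w \<and> length w < t \<and> good k (w@[m]) \<and> cls k w m = t})"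

definition AA where
  "AA k v t = {m. good k (v@[m]) \<and> cls k v m = t} \<union> {m. \<not> good k (v@[m]) \<and> Suc (length v) < t}"

fun part where
  "part (PS u0 k) = std_leaf u0"
| "part (SP u0 k v t) = std_leaf v \<inter> PP k u0 t"

fun pt where
  "pt (PS u0 k) = u0"
| "pt (SP u0 k v t) = v"

fun child where
  "child (PS u0 k) n = SP u0 k u0 (length u0 + 1 + n)"
| "child (SP u0 k v t) n = (if good k (v@[enumerate (AA k v t) n]) then PS (v@[enumerate (AA k v t) n]) (Suc k)
      else SP u0 k (v@[enumerate (AA k v t) n]) t)"

fun valid where
  "valid (PS u0 k) = (\<forall>j<k. std_leaf u0 \<subseteq> U j)"
| "valid (SP u0 k v t) = ((\<forall>j<k. std_leaf u0 \<subseteq> U j) \<and> pending k u0 v \<and> length v < t)"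

definition stf where "stf x = foldl child (PS [] 0) x"
definition FF where "FF x = part (stf x) \<inter> Y"

lemma stf_snoc: "stf (x@[n]) = child (stf x) n"
  by (simp add: stf_def)

lemma AA_inf:
  assumes "length v < t"
  shows "infinite (AA k v t)"
proof -
  let ?e = "enumerate (Gs k v)"
  have inj: "inj ?e" using inj_enumerate Gs_inf by blast
  define c where "c = t - length v - 1"
  let ?f = "\<lambda>j. ?e (prod_encode (c, j))"
  have "inj ?f" using inj unfolding inj_def
    by (metis prod_encode_eq prod.inject)
  moreover have "range ?f \<subseteq> AA k v t"
  proof
    fix m assume "m \<in> range ?f"
    then obtain j where m: "m = ?f j" by blast
    have "m \<in> Gs k v" using m enumerate_in_set Gs_inf by blast
    then have g: "good k (v@[m])" unfolding Gs_def by simp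
    have "inv_into UNIV ?e m = prod_encode (c, j)" using m inj by (simp add: inv_into_f_f)
    then have "cls k v m = t" unfolding cls_def c_def using assms by simp
    then show "m \<in> AA k v t" using g unfolding AA_def by simp
  qed
  ultimately show ?thesis using range_inj_infinite infinite_super by blast
qed

lemma valid_child: "valid s \<Longrightarrow> valid (child s n)"
proof (cases s)
  case (PS u0 k)
  assume "valid s" then show ?thesis using PS by (auto simp: pending_def)
next
  case (SP u0 k v t)
  assume vs: "valid s"
  let ?m = "enumerate (AA k v t) n"
  have inA: "?m \<in> AA k v t" using vs SP by (intro enumerate_in_set AA_inf) simp
  have pend: "pending k u0 v" and lt: "length v < t" and pre: "\<forall>j<k. std_leaf u0 \<subseteq> U j"
    using vs SP by auto
  have pfx: "prefix u0 v" using pend unfolding pending_def by simp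
  show ?thesis
  proof (cases "good k (v@[?m])")
    case True
    have "std_leaf (v@[?m]) \<subseteq> std_leaf u0"
      using pfx std_leaf_prefix by (metis prefix_prefix)
    then have "\<forall>j<Suc k. std_leaf (v@[?m]) \<subseteq> U j"
      using pre True unfolding good_def by (metis less_Suc_eq subset_trans)
    then show ?thesis using SP True by simp
  next
    case False
    have len: "Suc (length v) < t" using inA False unfolding AA_def by simp
    have "pending k u0 (v@[?m])"
      unfolding pending_def
    proof (intro conjI allI impI)
      show "prefix u0 (v@[?m])" using pfx by simp
      fix j assume j: "length u0 < j \<and> j \<le> length (v@[?m])"
      show "\<not> good k (take j (v@[?m]))"
      proof (cases "j \<le> length v")
        case True then show ?thesis using pend j unfolding pending_def by simp
      next
        case False then have "j = Suc (length v)" using j by simp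
        then show ?thesis using \<open>\<not> good k (v@[?m])\<close> by simp
      qed
    qed
    then show ?thesis using SP False pre len by simp
  qed
qed

lemma valid_stf: "valid (stf x)"
proof (induction x rule: rev_induct)
  case Nil then show ?case by (simp add: stf_def)
next
  case (snoc n x) then show ?case by (simp add: stf_snoc valid_child)
qed


lemma part_pt: "part s \<subseteq> std_leaf (pt s)"
  by (cases s) auto

lemma mem_PP: "q \<in> PP k u0 t \<longleftrightarrow> (\<exists>j. pending k u0 (qlist q j) \<and> j < t \<and> good k (qlist q (Suc j)) \<and> cls k (qlist q j) (q j) = t)"
proof
  assume "q \<in> PP k u0 t"
  then obtain w m where wm: "q \<in> std_leaf (w@[m])" "pending k u0 w" "length w < t" "good k (w@[m])" "cls k w m = t"
    unfolding PP_def by blast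
  have e: "w@[m] = qlist q (Suc (length w))" using wm(1) std_leaf_iff by simp
  then have "w = qlist q (length w)" "m = q (length w)" by (simp_all add: qlist_Suc)
  then show "\<exists>j. pending k u0 (qlist q j) \<and> j < t \<and> good k (qlist q (Suc j)) \<and> cls k (qlist q j) (q j) = t"
    using wm e by (intro exI[of _ "length w"]) metis
next
  assume "\<exists>j. pending k u0 (qlist q j) \<and> j < t \<and> good k (qlist q (Suc j)) \<and> cls k (qlist q j) (q j) = t"
  then obtain j where j: "pending k u0 (qlist q j)" "j < t" "good k (qlist q j @ [q j])" "cls k (qlist q j) (q j) = t"
    by (auto simp: qlist_Suc)
  have "q \<in> std_leaf (qlist q j @ [q j])" using qlist_in_std_leaf[of q "Suc j"] by (simp add: qlist_Suc)
  moreover have "std_leaf (qlist q j @ [q j]) \<in> {std_leaf (w@[m]) | w m. pending k u0 w \<and> length w < t \<and> good k (w@[m]) \<and> cls k w m = t}"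
    using j by (intro CollectI exI[of _ "qlist q j"] exI[of _ "q j"]) simp
  ultimately show "q \<in> PP k u0 t" unfolding PP_def by (rule UnionI[rotated])
qed

lemma pending_qlist: "pending k u0 (qlist q j) \<longleftrightarrow>
   u0 = qlist q (length u0) \<and> length u0 \<le> j \<and> (\<forall>i. length u0 < i \<and> i \<le> j \<longrightarrow> \<not> good k (qlist q i))"
  unfolding pending_def prefix_qlist by (auto simp: take_qlist)

lemma pending_lt_not:
  assumes "pending k u0 (qlist q j)" "pending k u0 (qlist q j')" "j < j'"
  shows "\<not> good k (qlist q (Suc j))"
proof -
  have "length u0 \<le> j" using assms(1) unfolding pending_qlist by blast
  moreover have "\<forall>i. length u0 < i \<and> i \<le> j' \<longrightarrow> \<not> good k (qlist q i)"
    using assms(2) unfolding pending_qlist by blast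
  ultimately show ?thesis using assms(3) by simp
qed

lemma pending_unique:
  assumes "pending k u0 (qlist q j)" "good k (qlist q (Suc j))"
    "pending k u0 (qlist q j')" "good k (qlist q (Suc j'))"
  shows "j = j'"
  using pending_lt_not[OF assms(1,3)] pending_lt_not[OF assms(3,1)] assms(2,4)
  by (metis linorder_neqE_nat)

lemma baire_cone:
  assumes "openin baire_space V" "q \<in> V"
  shows "\<exists>i. std_leaf (qlist q i) \<subseteq> V"
proof -
  have "\<exists>W. finite {i \<in> UNIV. W i \<noteq> topspace (discrete_topology (UNIV::nat set))} \<and>
      (\<forall>i \<in> UNIV. openin (discrete_topology UNIV) (W i)) \<and> q \<in> Pi\<^sub>E UNIV W \<and> Pi\<^sub>E UNIV W \<subseteq> V"
    using assms unfolding baire_space_def openin_product_topology_alt by blast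
  then obtain W where W: "finite {i. W i \<noteq> UNIV}" "q \<in> Pi\<^sub>E UNIV W" "Pi\<^sub>E UNIV W \<subseteq> V"
    by (auto simp only: topspace_discrete_topology UNIV_I simp_thms)
  obtain N where N0: "\<forall>i\<in>{i. W i \<noteq> UNIV}. i < N"
    using W(1) finite_nat_set_iff_bounded by blast
  have N: "\<And>i. W i \<noteq> UNIV \<Longrightarrow> i < N" using N0 by blast
  have "std_leaf (qlist q N) \<subseteq> Pi\<^sub>E UNIV W"
  proof
    fix r assume r: "r \<in> std_leaf (qlist q N)"
    have "r i \<in> W i" for i
    proof (cases "i < N")
      case True
      then have "r i = q i" using r unfolding std_leaf_def by simp
      then show ?thesis using W(2) by auto
    next
      case False then show ?thesis using N by blast
    qed
    then show "r \<in> Pi\<^sub>E UNIV W" by auto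
  qed
  then show ?thesis using W(3) by blast
qed

lemma child_sub: "valid s \<Longrightarrow> part (child s n) \<subseteq> part s"
proof (cases s)
  case (PS u0 k) then show ?thesis by auto
next
  case (SP u0 k v t)
  assume vs: "valid s"
  let ?m = "enumerate (AA k v t) n"
  have inA: "?m \<in> AA k v t" using vs SP by (intro enumerate_in_set AA_inf) simp
  have pend: "pending k u0 v" and lt: "length v < t" using vs SP by auto
  have sub: "std_leaf (v@[?m]) \<subseteq> std_leaf v" by (rule std_leaf_prefix) simp
  show ?thesis
  proof (cases "good k (v@[?m])")
    case True
    then have "cls k v ?m = t" using inA unfolding AA_def by simp
    then have "std_leaf (v@[?m]) \<subseteq> PP k u0 t" unfolding PP_def using True pend lt by blast
    then show ?thesis using SP True sub by auto
  next
    case False then show ?thesis using SP sub by auto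
  qed
qed

lemma child_cover:
  assumes vs: "valid s" and q: "q \<in> part s" "q \<in> Y"
  shows "\<exists>n. q \<in> part (child s n)"
proof (cases s)
  case (PS u0 k)
  have u0: "u0 = qlist q (length u0)" using q PS std_leaf_iff by simp
  have "q \<in> U k" using q(2) unfolding Y_def by blast
  then obtain i where i: "std_leaf (qlist q i) \<subseteq> U k" using baire_cone opn by blast
  define J where "J = {j. length u0 < j \<and> good k (qlist q j)}"
  have "max i (Suc (length u0)) \<in> J"
  proof -
    have "std_leaf (qlist q (max i (Suc (length u0)))) \<subseteq> std_leaf (qlist q i)"
      by (rule std_leaf_prefix) (simp add: prefix_qlist take_qlist)
    then show ?thesis using i unfolding J_def good_def by auto
  qed
  then have j0J: "(LEAST j. j \<in> J) \<in> J" by (rule LeastI)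
  define j0 where "j0 = (LEAST j. j \<in> J)"
  have lt0: "length u0 < j0" and g0: "good k (qlist q j0)" using j0J unfolding j0_def J_def by auto
  obtain jj where jj: "j0 = Suc jj" using lt0 by (cases j0) auto
  have notg: "\<not> good k (qlist q i')" if "length u0 < i'" "i' \<le> jj" for i'
  proof
    assume "good k (qlist q i')"
    then have "i' \<in> J" using that unfolding J_def by simp
    then have "j0 \<le> i'" unfolding j0_def by (rule Least_le)
    then show False using that jj by simp
  qed
  have pend: "pending k u0 (qlist q jj)" unfolding pending_qlist using u0 lt0 jj notg by auto
  define t where "t = cls k (qlist q jj) (q jj)"
  have tge: "t \<ge> Suc jj" unfolding t_def cls_def by simp
  have "q \<in> PP k u0 t" unfolding mem_PP using pend g0 jj t_def tge by (intro exI[of _ jj]) auto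
  moreover have "length u0 + 1 + (t - length u0 - 1) = t" using tge lt0 jj by simp
  ultimately have "q \<in> part (child s (t - length u0 - 1))" using PS q by simp
  then show ?thesis by blast
next
  case (SP u0 k v t)
  have pend: "pending k u0 v" and lt: "length v < t" using vs SP by auto
  have qv: "q \<in> std_leaf v" "q \<in> PP k u0 t" using q SP by auto
  have v: "v = qlist q (length v)" using qv std_leaf_iff by simp
  obtain j where j: "pending k u0 (qlist q j)" "j < t" "good k (qlist q (Suc j))" "cls k (qlist q j) (q j) = t"
    using qv(2) mem_PP by blast
  have pv: "pending k u0 (qlist q (length v))" using pend v by simp
  have vm: "v @ [q (length v)] = qlist q (Suc (length v))" using v by (simp add: qlist_Suc)
  have inA: "q (length v) \<in> AA k v t"
  proof -
    consider "j = length v" | "j < length v" | "length v < j" by linarith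
    then show ?thesis
    proof cases
      case 1 then show ?thesis using j v vm unfolding AA_def by auto
    next
      case 2 then show ?thesis using pv j unfolding pending_qlist by (meson Suc_leI le_imp_less_Suc)
    next
      case 3
      have "\<not> good k (qlist q (Suc (length v)))"
        using j(1) pv 3 unfolding pending_qlist by auto
      then show ?thesis using 3 j(2) vm unfolding AA_def by auto
    qed
  qed
  obtain n where n: "enumerate (AA k v t) n = q (length v)"
    using enumerate_Ex[OF AA_inf[OF lt] inA] by blast
  have qin: "q \<in> std_leaf (v @ [q (length v)])" using vm qlist_in_std_leaf by metis
  have "q \<in> part (child s n)" using SP n qin qv by auto
  then show ?thesis by blast
qed

lemma child_disj:
  assumes vs: "valid s" and nn: "n \<noteq> n'"
  shows "part (child s n) \<inter> part (child s n') = {}"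
proof (cases s)
  case (PS u0 k)
  show ?thesis
  proof (rule ccontr)
    assume "part (child s n) \<inter> part (child s n') \<noteq> {}"
    then obtain q where "q \<in> PP k u0 (length u0 + 1 + n)" "q \<in> PP k u0 (length u0 + 1 + n')"
      using PS by auto
    then obtain j j' where j: "pending k u0 (qlist q j)" "good k (qlist q (Suc j))" "cls k (qlist q j) (q j) = length u0 + 1 + n"
      and j': "pending k u0 (qlist q j')" "good k (qlist q (Suc j'))" "cls k (qlist q j') (q j') = length u0 + 1 + n'"
      unfolding mem_PP by blast
    have "j = j'" using pending_unique j j' by blast
    then show False using j(3) j'(3) nn by simp
  qed
next
  case (SP u0 k v t)
  have lt: "length v < t" using vs SP by auto
  have ne: "enumerate (AA k v t) n \<noteq> enumerate (AA k v t) n'"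
    using inj_enumerate[OF AA_inf[OF lt]] nn unfolding inj_def by blast
  have "part (child s n) \<subseteq> std_leaf (v @ [enumerate (AA k v t) n])"
    "part (child s n') \<subseteq> std_leaf (v @ [enumerate (AA k v t) n'])"
    using SP by auto
  then show ?thesis using std_leaf_disj[OF ne] by blast
qed

end



lemma prefix_nth': "prefix xs ys \<Longrightarrow> i < length xs \<Longrightarrow> xs ! i = ys ! i"
  by (auto simp: prefix_def nth_append)

context setting begin

definition sq where "sq a n = stf (map a [0..<n])"

lemma sq_0: "sq a 0 = PS [] 0" by (simp add: sq_def stf_def)
lemma sq_Suc: "sq a (Suc n) = child (sq a n) (a n)" by (simp add: sq_def stf_snoc)

lemma valid_sq: "valid (sq a n)" unfolding sq_def by (rule valid_stf)

definition mu where "mu s = 2 * length (pt s) + (case s of PS _ _ \<Rightarrow> 0 | SP _ _ _ _ \<Rightarrow> 1)"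

lemma mu_child: "mu s < mu (child s n)"
  by (cases s) (auto simp: mu_def)

lemma pt_child_prefix: "prefix (pt s) (pt (child s n))"
  by (cases s) auto

lemma mu_sq: "n \<le> mu (sq a n)"
proof (induction n)
  case 0 then show ?case by simp
next
  case (Suc n) then show ?case using mu_child[of "sq a n" "a n"] by (simp add: sq_Suc)
qed

lemma pt_sq_mono: "m \<le> n \<Longrightarrow> prefix (pt (sq a m)) (pt (sq a n))"
proof (induction n rule: dec_induct)
  case base then show ?case by simp
next
  case (step n) then show ?case
    using pt_child_prefix[of "sq a n" "a n"] by (simp add: sq_Suc)
qed

lemma len_pt_sq: "i < length (pt (sq a (2*i+2)))"
proof -
  have "2*i+2 \<le> mu (sq a (2*i+2))" by (rule mu_sq)
  moreover have "mu (sq a (2*i+2)) \<le> 2 * length (pt (sq a (2*i+2))) + 1"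
    unfolding mu_def by (auto split: st.split)
  ultimately show ?thesis by linarith
qed

definition qq where "qq a i = pt (sq a (2*i+2)) ! i"

lemma qq_leaf: "qq a \<in> std_leaf (pt (sq a n))"
  unfolding std_leaf_def
proof (intro CollectI allI impI)
  fix i assume i: "i < length (pt (sq a n))"
  define N where "N = max n (2*i+2)"
  have p1: "prefix (pt (sq a n)) (pt (sq a N))" by (rule pt_sq_mono) (simp add: N_def)
  have p2: "prefix (pt (sq a (2*i+2))) (pt (sq a N))" by (rule pt_sq_mono) (simp add: N_def)
  have "qq a i = pt (sq a N) ! i" unfolding qq_def using prefix_nth'[OF p2 len_pt_sq] .
  also have "\<dots> = pt (sq a n) ! i" using prefix_nth'[OF p1 i] by simp
  finally show "qq a i = pt (sq a n) ! i" .
qed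

lemma qq_PP_aux:
  "\<forall>n v. t - length v = d \<longrightarrow> sq a n = SP u0 k v t \<longrightarrow> qq a \<in> PP k u0 t \<and> (\<exists>n' w. sq a n' = PS w (Suc k))"
proof (induction d rule: less_induct)
  case (less d)
  show ?case
  proof (intro allI impI)
    fix n v assume d: "t - length v = d" and s: "sq a n = SP u0 k v t"
    have vs: "valid (SP u0 k v t)" using valid_sq[of a n] s by simp
    have pend: "pending k u0 v" and lt: "length v < t" using vs by auto
    let ?m = "enumerate (AA k v t) (a n)"
    have inA: "?m \<in> AA k v t" using lt by (intro enumerate_in_set AA_inf)
    show "qq a \<in> PP k u0 t \<and> (\<exists>n' w. sq a n' = PS w (Suc k))"
    proof (cases "good k (v@[?m])")
      case True
      have sn: "sq a (Suc n) = PS (v@[?m]) (Suc k)" using s True by (simp add: sq_Suc)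
      have "cls k v ?m = t" using inA True unfolding AA_def by simp
      then have "std_leaf (v@[?m]) \<subseteq> PP k u0 t" unfolding PP_def using True pend lt by blast
      moreover have "qq a \<in> std_leaf (v@[?m])" using qq_leaf[of a "Suc n"] sn by simp
      ultimately show ?thesis using sn by blast
    next
      case False
      have sn: "sq a (Suc n) = SP u0 k (v@[?m]) t" using s False by (simp add: sq_Suc)
      have "Suc (length v) < t" using inA False unfolding AA_def by simp
      then have "t - length (v@[?m]) < d" using d by simp
      then show ?thesis using less.IH sn by blast
    qed
  qed
qed

lemma qq_PP: "sq a n = SP u0 k v t \<Longrightarrow> qq a \<in> PP k u0 t"
  using qq_PP_aux by blast

lemma end_phase: "sq a n = SP u0 k v t \<Longrightarrow> \<exists>n' w. sq a n' = PS w (Suc k)"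
  using qq_PP_aux by blast

lemma reach: "\<exists>n u0. sq a n = PS u0 k"
proof (induction k)
  case 0 then show ?case using sq_0 by blast
next
  case (Suc k)
  then obtain n u0 where "sq a n = PS u0 k" by blast
  then have "sq a (Suc n) = SP u0 k u0 (length u0 + 1 + a n)" by (simp add: sq_Suc)
  then show ?case using end_phase by blast
qed

lemma qq_Y: "qq a \<in> Y"
  unfolding Y_def
proof
  fix j
  obtain n u0 where s: "sq a n = PS u0 (Suc j)" using reach by blast
  then have "std_leaf u0 \<subseteq> U j" using valid_sq[of a n] by simp
  moreover have "qq a \<in> std_leaf u0" using qq_leaf[of a n] s by simp
  ultimately show "qq a \<in> U j" by blast
qed

lemma qq_part: "qq a \<in> part (sq a n)"
proof (cases "sq a n")
  case (PS u0 k) then show ?thesis using qq_leaf[of a n] by simp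
next
  case (SP u0 k v t) then show ?thesis using qq_leaf[of a n] qq_PP by simp
qed

lemma fruit_unique: "(\<And>n. r \<in> part (sq a n)) \<Longrightarrow> r = qq a"
proof
  fix i assume h: "\<And>n. r \<in> part (sq a n)"
  have "r \<in> std_leaf (pt (sq a (2*i+2)))" using h part_pt by blast
  then show "r i = qq a i" unfolding std_leaf_def qq_def using len_pt_sq by blast
qed

end



context setting begin

lemma leaf_open: "openin \<tau> (std_leaf x)"
  using pit unfolding pi_tree_def baire_foliage_tree_def by blast

lemma part_open: "openin \<tau> (part s)"
proof (cases s)
  case (PS u0 k) then show ?thesis using leaf_open by simp
next
  case (SP u0 k v t)
  have "openin \<tau> (PP k u0 t)" unfolding PP_def
    by (rule openin_Union) (auto intro: leaf_open)
  then show ?thesis using SP leaf_open by (simp add: openin_Int)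
qed

lemma FF_open: "openin (subtopology \<tau> Y) (FF x)"
  unfolding FF_def openin_subtopology using part_open by blast

lemma FF_sq: "FF (map a [0..<n]) = part (sq a n) \<inter> Y"
  by (simp add: FF_def sq_def)

lemma FF_snoc: "FF (x@[n]) = part (child (stf x) n) \<inter> Y"
  by (simp add: FF_def stf_snoc)

lemma FF_ne: "FF x \<noteq> {}"
proof -
  define a where "a i = (if i < length x then x ! i else 0)" for i
  have "map a [0..<length x] = x" by (rule nth_equalityI) (auto simp: a_def)
  then have "FF x = part (sq a (length x)) \<inter> Y" using FF_sq by metis
  then show ?thesis using qq_part qq_Y by blast
qed

lemma locally_strict_FF: "locally_strict FF"
  unfolding locally_strict_def
proof (intro allI impI conjI ballI)
  fix x
  have vs: "valid (stf x)" by (rule valid_stf)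
  show "FF x = (\<Union>s\<in>sons x. FF s)"
  proof
    show "FF x \<subseteq> (\<Union>s\<in>sons x. FF s)"
    proof
      fix q assume "q \<in> FF x"
      then have "q \<in> part (stf x)" "q \<in> Y" unfolding FF_def by auto
      then obtain n where "q \<in> part (child (stf x) n)" using child_cover vs by blast
      then have "q \<in> FF (x@[n])" using \<open>q \<in> Y\<close> FF_snoc by simp
      moreover have "x@[n] \<in> sons x" unfolding sons_def by blast
      ultimately show "q \<in> (\<Union>s\<in>sons x. FF s)" by blast
    qed
    show "(\<Union>s\<in>sons x. FF s) \<subseteq> FF x"
      using child_sub[OF vs] unfolding sons_def FF_def by (auto simp: stf_snoc) blast
  qed
  fix s t assume "s \<in> sons x" "t \<in> sons x" "s \<noteq> t"
  then obtain n n' where "s = x@[n]" "t = x@[n']" "n \<noteq> n'" unfolding sons_def by auto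
  then show "FF s \<inter> FF t = {}" using child_disj[OF vs] FF_snoc by auto
qed

lemma strict_branches_FF: "strict_branches FF"
  unfolding strict_branches_def
proof (intro allI impI)
  fix B assume "skel_branch B"
  then obtain a where B: "B = range (\<lambda>n. map a [0..<n])" using branch_char by blast
  have "fruit FF B = {qq a}"
  proof
    show "{qq a} \<subseteq> fruit FF B" unfolding fruit_def B using FF_sq qq_part qq_Y by auto
    show "fruit FF B \<subseteq> {qq a}"
    proof
      fix r assume "r \<in> fruit FF B"
      then have "\<And>n. r \<in> part (sq a n)" unfolding fruit_def B using FF_sq by blast
      then show "r \<in> {qq a}" using fruit_unique by blast
    qed
  qed
  then show "\<exists>p. fruit FF B = {p}" by blast
qed

lemma FF_pt: "p \<in> FF x \<Longrightarrow> pt (stf x) = qlist p (length (pt (stf x)))"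
proof -
  assume "p \<in> FF x"
  then have "p \<in> std_leaf (pt (stf x))" using part_pt unfolding FF_def by blast
  then show ?thesis by (rule std_leaf_iff[THEN iffD1])
qed

lemma FF_child_ex: "p \<in> FF x \<Longrightarrow> \<exists>n. p \<in> FF (x@[n])"
proof -
  assume h: "p \<in> FF x"
  then have "p \<in> part (stf x)" "p \<in> Y" unfolding FF_def by auto
  then obtain n where "p \<in> part (child (stf x) n)" using child_cover[OF valid_stf] by blast
  then have "p \<in> FF (x@[n])" using \<open>p \<in> Y\<close> by (simp add: FF_snoc)
  then show ?thesis by blast
qed

lemma to_SP:
  assumes "p \<in> FF x"
  shows "\<exists>x'. p \<in> FF x' \<and> (\<exists>u0 k t. stf x' = SP u0 k (pt (stf x)) t)"
proof (cases "stf x")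
  case (PS u0 k)
  obtain n where "p \<in> FF (x@[n])" using FF_child_ex assms by blast
  moreover have "stf (x@[n]) = SP u0 k u0 (length u0 + 1 + n)" using PS by (simp add: stf_snoc)
  ultimately show ?thesis using PS by auto
next
  case (SP u0 k v t)
  then show ?thesis using assms by auto
qed

lemma find_len:
  assumes "p \<in> Y"
  shows "\<exists>x. p \<in> FF x \<and> length (pt (stf x)) = l"
proof (induction l)
  case 0
  have "p \<in> FF []" using assms by (simp add: FF_def stf_def)
  moreover have "pt (stf []) = []" by (simp add: stf_def)
  ultimately show ?case by auto
next
  case (Suc l)
  then obtain x where x: "p \<in> FF x" "length (pt (stf x)) = l" by blast
  then obtain x' u0 k t where x': "p \<in> FF x'" "stf x' = SP u0 k (pt (stf x)) t" using to_SP by blast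
  obtain n where n: "p \<in> FF (x'@[n])" using FF_child_ex x'(1) by blast
  have "pt (stf (x'@[n])) = pt (stf x) @ [enumerate (AA k (pt (stf x)) t) n]"
    using x'(2) by (simp add: stf_snoc)
  then have "length (pt (stf (x'@[n]))) = Suc l" using x(2) by simp
  then show ?case using n by blast
qed

lemma find_SP:
  assumes "p \<in> Y"
  shows "\<exists>x. p \<in> FF x \<and> (\<exists>u0 k t. stf x = SP u0 k (qlist p l) t)"
proof -
  obtain x where x: "p \<in> FF x" "length (pt (stf x)) = l" using find_len assms by blast
  then obtain x' u0 k t where x': "p \<in> FF x'" "stf x' = SP u0 k (pt (stf x)) t" using to_SP by blast
  have "pt (stf x) = qlist p l" using FF_pt[OF x(1)] x(2) by simp
  then have "stf x' = SP u0 k (qlist p l) t" using x'(2) by simp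
  then show ?thesis using x'(1) by blast
qed

end



context setting begin

lemma grows_FF: "grows_into (subtopology \<tau> Y) FF"
  unfolding grows_into_def
proof (intro ballI allI impI)
  fix p U' assume pY: "p \<in> topspace (subtopology \<tau> Y)"
    and hU: "openin (subtopology \<tau> Y) U' \<and> p \<in> U'"
  have pY': "p \<in> Y" using pY by simp
  obtain V where V: "openin \<tau> V" "U' = V \<inter> Y" using hU[THEN conjunct1, unfolded openin_subtopology] by blast
  have pV: "p \<in> V" using hU V by blast
  have gS: "grows_into \<tau> std_leaf" using pit unfolding pi_tree_def by blast
  obtain z where z: "z \<in> scope std_leaf p" "shoot std_leaf z \<ggreater> {V}"
  proof -
    have "p \<in> topspace \<tau>" using top by simp
    then have "\<forall>U. openin \<tau> U \<and> p \<in> U \<longrightarrow> (\<exists>z\<in>scope std_leaf p. shoot std_leaf z \<ggreater> {U})"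
      by (rule bspec[OF gS[unfolded grows_into_def]])
    then have "\<exists>z\<in>scope std_leaf p. shoot std_leaf z \<ggreater> {V}" using V(1) pV by blast
    then show ?thesis using that by blast
  qed
  have pz: "p \<in> std_leaf z" using z(1) unfolding scope_def by simp
  have "V \<noteq> {}" using pV by blast
  then obtain G where G: "G \<in> shoot std_leaf z" "G \<noteq> {}" "G \<subseteq> V"
  proof -
    have "\<forall>D\<in>{V}. D \<noteq> {} \<longrightarrow> (\<exists>G\<in>shoot std_leaf z. G \<noteq> {} \<and> G \<subseteq> D)"
      using z(2) unfolding pi_base_refines_def .
    then show ?thesis using \<open>V \<noteq> {}\<close> that by blast
  qed
  then obtain C where C: "G = (\<Union>s\<in>C. std_leaf s)" "C \<subseteq> sons z" "finite (sons z - C)"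
    unfolding shoot_def by blast
  define E where "E = {n. z@[n] \<notin> C}"
  have "sons z - C = (\<lambda>n. z@[n]) ` E" unfolding sons_def E_def by auto
  moreover have "inj (\<lambda>n. z@[n])" by (auto simp: inj_def)
  ultimately have fE: "finite E" using C(3) by (metis finite_imageD inj_on_subset subset_UNIV)
  have zq: "z = qlist p (length z)" using std_leaf_iff[THEN iffD1, OF pz] .
  obtain x u0 k t where x: "p \<in> FF x" "stf x = SP u0 k (qlist p (length z)) t"
    using find_SP[OF pY'] by blast
  have sx: "stf x = SP u0 k z t" using x(2) by (simp only: zq[symmetric])
  have lt: "length z < t" using valid_stf[of x] sx by simp
  let ?e = "enumerate (AA k z t)"
  have inje: "inj ?e" using inj_enumerate AA_inf[OF lt] by blast
  define C' where "C' = {x@[n] | n. ?e n \<notin> E}"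
  define G' where "G' = (\<Union>s\<in>C'. FF s)"
  have sub: "FF (x@[n]) \<subseteq> std_leaf (z @ [?e n]) \<inter> Y" for n
  proof -
    have "part (child (stf x) n) \<subseteq> std_leaf (pt (child (stf x) n))" by (rule part_pt)
    moreover have "pt (child (stf x) n) = z @ [?e n]" using sx by simp
    ultimately show ?thesis using FF_snoc by auto
  qed
  have G'sh: "G' \<in> shoot FF x"
  proof -
    have "C' \<subseteq> sons x" unfolding C'_def sons_def by blast
    moreover have "sons x - C' \<subseteq> (\<lambda>n. x@[n]) ` (?e -` E)" unfolding C'_def sons_def by auto
    moreover have "finite (?e -` E)" using finite_vimageI[OF fE inje] .
    ultimately have "finite (sons x - C')" by (meson finite_imageI finite_subset)
    then show ?thesis unfolding shoot_def G'_def using \<open>C' \<subseteq> sons x\<close> by blast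
  qed
  have G'sub: "G' \<subseteq> U'"
  proof
    fix r assume "r \<in> G'"
    then obtain n where n: "?e n \<notin> E" "r \<in> FF (x@[n])" unfolding G'_def C'_def by blast
    have "z @ [?e n] \<in> C" using n(1) unfolding E_def by simp
    then have "std_leaf (z @ [?e n]) \<subseteq> V" using C(1) G(3) by blast
    then show "r \<in> U'" using sub n(2) V(2) by blast
  qed
  have G'ne: "G' \<noteq> {}"
  proof -
    have "finite (?e -` E)" using finite_vimageI[OF fE inje] .
    then obtain n where "n \<notin> ?e -` E" using ex_new_if_finite infinite_UNIV_nat by blast
    then have "x@[n] \<in> C'" unfolding C'_def by blast
    then show ?thesis unfolding G'_def using FF_ne by blast
  qed
  have "shoot FF x \<ggreater> {U'}" unfolding pi_base_refines_def using G'sh G'sub G'ne by blast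
  moreover have "x \<in> scope FF p" using x(1) unfolding scope_def by simp
  ultimately show "\<exists>z\<in>scope FF p. shoot FF z \<ggreater> {U'}" by blast
qed

lemma pi_tree_FF: "pi_tree (subtopology \<tau> Y) FF"
  unfolding pi_tree_def baire_foliage_tree_def
proof (intro conjI allI)
  show "\<And>x. openin (subtopology \<tau> Y) (FF x)" by (rule FF_open)
  show "locally_strict FF" by (rule locally_strict_FF)
  show "strict_branches FF" by (rule strict_branches_FF)
  show "FF [] = topspace (subtopology \<tau> Y)" by (simp add: FF_def stf_def top)
  show "grows_into (subtopology \<tau> Y) FF" by (rule grows_FF)
qed

end

theorem mainTheorem3:
  fixes \<tau> :: "(nat \<Rightarrow> nat) topology" and U :: "nat \<Rightarrow> (nat \<Rightarrow> nat) set"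
  assumes "topspace \<tau> = UNIV"
    and "pi_tree \<tau> std_leaf"
    and "\<And>n. openin baire_space (U n)"
    and "\<And>n. pi_dense (U n)"
  shows "\<exists>F :: nat list \<Rightarrow> (nat \<Rightarrow> nat) set. pi_tree (subtopology \<tau> (\<Inter>n. U n)) F"
proof -
  interpret setting \<tau> U using assms by (unfold_locales) auto
  show ?thesis using pi_tree_FF unfolding Y_def by blast
qed


end
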